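(* Let $C=(1,c_2,c_3,c_4,c_5,c_6)=(1,c_2,2c_2,c_4,c_2+c_4,2c_4)$ be a system with $c_4\ge 3c_2-1$ and $c_4\ne 3c_2$, and let $\ell=\lceil c_5/c_3\rceil$. Suppose $\mathrm{grd}_C(\ell c_3)=\ell c_3-c_5+1-\lfloor(\ell c_3-c_5)/c_2\rfloor(c_2-1)$ and $\mathrm{grd}_C(\ell c_3)\le\ell$. Then $C$ is canonical and the subsystem $(1,c_2,2c_2,c_4,c_2+c_4)$ is noncanonical.
   Context: A system is a tuple $C=(c_1,\dots,c_n)$ of integers with $1=c_1<c_2<\dots<c_n$; for $k\le n$, $(c_1,\dots,c_k)$ is a subsystem. For a positive integer $v$, $\mathrm{opt}_C(v)$ is the minimum of $\sum_i x_i$ over $x\in\mathbb{Z}_{\ge0}^n$ with $\sum_i c_ix_i=v$. The greedy representation of $v$ is produced by: for $i=n$ down to $1$, while $c_i\le$ remaining value, take a coin $c_i$. $\mathrm{grd}_C(v)$ is its number of coins. A positive integer $w$ is a counterexample if $\mathrm{opt}_C(w)<\mathrm{grd}_C(w)$; $C$ is canonical if it has none, noncanonical otherwise. *)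

theory Defs
  imports Complex_Main
begin

definition coin_system :: "nat list \<Rightarrow> bool" where
  "coin_system C \<longleftrightarrow> C \<noteq> [] \<and> hd C = 1 \<and> sorted_wrt (<) C"

definition opt :: "nat list \<Rightarrow> nat \<Rightarrow> nat" where
  "opt C v = (LEAST k. \<exists>x::nat list. length x = length C \<and> sum_list x = k \<and>
                 (\<Sum>i<length C. C ! i * x ! i) = v)"

text \<open>Greedy on coins listed from largest to smallest: taking coin c while c \<le> remaining
  takes (v div c) coins and leaves (v mod c).\<close>
fun grd_desc :: "nat list \<Rightarrow> nat \<Rightarrow> nat" where
  "grd_desc [] v = 0"
| "grd_desc (c # cs) v = v div c + grd_desc cs (v mod c)"

definition grd :: "nat list \<Rightarrow> nat \<Rightarrow> nat" where
  "grd C v = grd_desc (rev C) v"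

definition counterexample :: "nat list \<Rightarrow> nat \<Rightarrow> bool" where
  "counterexample C w \<longleftrightarrow> 0 < w \<and> opt C w < grd C w"

definition canonical :: "nat list \<Rightarrow> bool" where
  "canonical C \<longleftrightarrow> (\<nexists>w. counterexample C w)"

end

theory Submission
  imports Defs
begin

definition g3 :: "nat \<Rightarrow> nat \<Rightarrow> nat" where
  "g3 a x = x div (2*a) + x mod (2*a) div a + x mod a"

lemma g3_eq:
  assumes "0 < a" "s < a"
  shows "g3 a (q*a+s) = (q+1) div 2 + s"
proof -
  have e: "q*a+s = ((q mod 2)*a + s) + (q div 2)*(2*a)"
  proof -
    have "q = q mod 2 + 2 * (q div 2)" by simp
    then have "q*a = (q mod 2)*a + (q div 2)*(2*a)"
      by (metis distrib_right mult.assoc mult.commute)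
    then show ?thesis by simp
  qed
  have lt: "(q mod 2)*a + s < 2*a"
  proof (cases "q mod 2 = 0")
    case True then show ?thesis using assms by simp
  next
    case False then have "q mod 2 = 1" by presburger
    then show ?thesis using assms by simp
  qed
  have nz: "2*a \<noteq> 0" using assms by simp
  have d1: "(q*a+s) div (2*a) = q div 2"
    unfolding e div_mult_self1[OF nz] using lt by simp
  have m1: "(q*a+s) mod (2*a) = (q mod 2)*a + s"
    unfolding e mod_mult_self1 using lt by simp
  have d2: "((q mod 2)*a + s) div a = q mod 2"
    using assms by simp
  have m2: "(q*a+s) mod a = s"
    using assms by simp
  have "q div 2 + q mod 2 = (q+1) div 2" by presburger
  then show ?thesis unfolding g3_def d1 m1 d2 m2 by simp
qed

lemma g3_alt:
  assumes "0 < a"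
  shows "g3 a y = (y div a + 1) div 2 + y mod a"
  using g3_eq[OF assms, of "y mod a" "y div a"] assms
  by (simp add: div_mult_mod_eq)

lemma g3_plus_a:
  assumes "0 < a"
  shows "g3 a y \<le> g3 a (y + a)" "g3 a (y + a) \<le> g3 a y + 1"
  using assms by (simp_all add: g3_alt)

lemma g3_plus_2a:
  assumes "0 < a"
  shows "g3 a (y + 2*a) = g3 a y + 1"
  using assms by (simp add: g3_alt)

definition G5 :: "nat \<Rightarrow> nat \<Rightarrow> nat \<Rightarrow> nat" where
  "G5 a b r = r div (a+b) + r mod (a+b) div b + g3 a (r mod (a+b) mod b)"

lemma grd6: "grd [1, a, 2*a, b, a+b, 2*b] v = v div (2*b) + G5 a b (v mod (2*b))"
  unfolding grd_def G5_def g3_def by (simp add: mod_mod_cancel)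

lemma G5_big:
  assumes "a+b \<le> r" "r < 2*b"
  shows "G5 a b r = 1 + g3 a (r - (a+b))"
proof -
  have d: "r div (a+b) = 1" using assms by (intro div_nat_eqI) auto
  have m: "r mod (a+b) = r - (a+b)" using assms by (simp add: le_mod_geq)
  have lt: "r - (a+b) < b" using assms by simp
  show ?thesis unfolding G5_def d m using lt by simp
qed

lemma G5_mid:
  assumes "b \<le> r" "r < a+b" and ab: "2*a < b"
  shows "G5 a b r = 1 + g3 a (r - b)"
proof -
  have d: "r div (a+b) = 0" "r mod (a+b) = r" using assms by auto
  have d2: "r div b = 1" using assms ab by (intro div_nat_eqI) auto
  have m: "r mod b = r - b" using assms ab by (simp add: le_mod_geq)
  show ?thesis unfolding G5_def d d2 m by simp
qed

lemma G5_small: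
  assumes "r < b"
  shows "G5 a b r = g3 a r"
  unfolding G5_def using assms by simp

lemma Grec:
  assumes "2*b \<le> v" and ab: "2*a < b"
  shows "grd [1, a, 2*a, b, a+b, 2*b] v = 1 + grd [1, a, 2*a, b, a+b, 2*b] (v - 2*b)"
proof -
  have "v div (2*b) = Suc ((v - 2*b) div (2*b))" using assms ab by (simp add: le_div_geq)
  moreover have "v mod (2*b) = (v - 2*b) mod (2*b)" using assms by (simp add: le_mod_geq)
  ultimately show ?thesis unfolding grd6 by simp
qed

lemma Gsmall:
  assumes "v < 2*b"
  shows "grd [1, a, 2*a, b, a+b, 2*b] v = G5 a b v"
  unfolding grd6 using assms by simp

context
  fixes a b p t :: nat
  assumes a2: "2 \<le> a" and ab: "2*a < b" and bp: "b = p*a + t" and tla: "t < a"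
    and K: "t = 0 \<or> a \<le> t + p div 2" and p2: "2 \<le> p"
begin

lemma lemB:
  assumes "a+b \<le> z"
  shows "1 + g3 a (z-(a+b)) \<le> g3 a z"
proof -
  define y where "y = z - (a+b)"
  define q where "q = y div a"
  define s where "s = y mod a"
  have a0: "0 < a" using a2 by simp
  have ys: "y = q*a+s" unfolding q_def s_def by simp
  have sa: "s < a" unfolding s_def using a0 by simp
  have gy: "g3 a y = (q+1) div 2 + s" using g3_eq[OF a0 sa] ys by simp
  have z: "z = (q+p+1)*a + (s+t)" using assms ys bp unfolding y_def by (simp add: algebra_simps)
  show ?thesis
  proof (cases "s+t < a")
    case True
    have "g3 a z = (q+p+1+1) div 2 + (s+t)" unfolding z by (rule g3_eq[OF a0 True])
    moreover have "(q+1) div 2 + 1 \<le> (q+p+1+1) div 2" using p2 by presburger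
    ultimately show ?thesis using gy unfolding y_def[symmetric] by linarith
  next
    case False
    then have z2: "z = (q+p+2)*a + (s+t-a)" using z by (simp add: algebra_simps)
    have "s+t-a < a" using False sa tla by simp
    then have "g3 a z = (q+p+2+1) div 2 + (s+t-a)" unfolding z2 by (rule g3_eq[OF a0])
    moreover have "(q+1) div 2 + 1 + p div 2 \<le> (q+p+2+1) div 2" by presburger
    moreover have "a \<le> t + p div 2" using K False sa by auto
    ultimately show ?thesis using gy False unfolding y_def[symmetric] by linarith
  qed
qed

lemma lemD:
  assumes "b - a \<le> z"
  shows "g3 a (z-(b-a)) \<le> g3 a z"
proof -
  define y where "y = z - (b-a)"
  define q where "q = y div a"
  define s where "s = y mod a"
  have a0: "0 < a" using a2 by simp
  have ys: "y = q*a+s" unfolding q_def s_def by simp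
  have sa: "s < a" unfolding s_def using a0 by simp
  have gy: "g3 a y = (q+1) div 2 + s" using g3_eq[OF a0 sa] ys by simp
  obtain p1 where p1: "p = Suc p1" using p2 by (cases p) auto
  have z: "z = (q+p1)*a + (s+t)" using assms ys bp ab p1 unfolding y_def by (simp add: algebra_simps)
  show ?thesis
  proof (cases "s+t < a")
    case True
    have "g3 a z = (q+p1+1) div 2 + (s+t)" unfolding z by (rule g3_eq[OF a0 True])
    moreover have "(q+1) div 2 \<le> (q+p1+1) div 2" by presburger
    ultimately show ?thesis using gy unfolding y_def[symmetric] by linarith
  next
    case False
    then have z2: "z = (q+p1+1)*a + (s+t-a)" using z by (simp add: algebra_simps)
    have "s+t-a < a" using False sa tla by simp
    then have "g3 a z = (q+p1+1+1) div 2 + (s+t-a)" unfolding z2 by (rule g3_eq[OF a0])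
    moreover have "(q+1) div 2 + p div 2 \<le> (q+p1+1+1) div 2" using p1 by presburger
    moreover have "a \<le> t + p div 2" using K False sa by auto
    ultimately show ?thesis using gy False unfolding y_def[symmetric] by linarith
  qed
qed

lemma lemF:
  assumes "b \<le> z" "z < a+b"
  shows "1 + (z-b) \<le> g3 a z"
proof -
  define r where "r = z - b"
  have a0: "0 < a" using a2 by simp
  have ra: "r < a" using assms unfolding r_def by simp
  have z: "z = p*a + (t+r)" using assms bp unfolding r_def by simp
  show ?thesis
  proof (cases "t+r < a")
    case True
    have "g3 a z = (p+1) div 2 + (t+r)" unfolding z by (rule g3_eq[OF a0 True])
    moreover have "1 \<le> (p+1) div 2" using p2 by presburger
    ultimately show ?thesis unfolding r_def[symmetric] by linarith
  next
    case False
    then have z2: "z = (p+1)*a + (t+r-a)" using z by (simp add: algebra_simps)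
    have "t+r-a < a" using False ra tla by simp
    then have "g3 a z = (p+1+1) div 2 + (t+r-a)" unfolding z2 by (rule g3_eq[OF a0])
    moreover have "(p+1+1) div 2 = p div 2 + 1" by presburger
    moreover have "a \<le> t + p div 2" using K False ra by auto
    ultimately show ?thesis using False unfolding r_def[symmetric] by linarith
  qed
qed


lemma key:
  "grd [1, a, 2*a, b, a+b, 2*b] v \<le> g3 a v \<and>
   (b \<le> v \<longrightarrow> grd [1, a, 2*a, b, a+b, 2*b] v \<le> 1 + g3 a (v-b)) \<and>
   (a+b \<le> v \<longrightarrow> grd [1, a, 2*a, b, a+b, 2*b] v \<le> 1 + g3 a (v-(a+b)))"
proof (induction v rule: less_induct)
  case (less v)
  have a0: "0 < a" using a2 by simp
  have chain1: "\<And>x y z w u::nat. x = 1 + y \<Longrightarrow> y \<le> z \<Longrightarrow> z \<le> w \<Longrightarrow> 1 + w \<le> u \<Longrightarrow> x \<le> u"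
    by simp
  have chain2: "\<And>x y z w::nat. x = 1 + y \<Longrightarrow> y \<le> z \<Longrightarrow> z \<le> w \<Longrightarrow> x \<le> 1 + w"
    by simp
  have mono_a: "\<And>y. a \<le> y \<Longrightarrow> g3 a (y - a) \<le> g3 a y"
  proof -
    fix y assume "a \<le> y"
    then have "y - a + a = y" by simp
    then show "g3 a (y - a) \<le> g3 a y" using g3_plus_a(1)[OF a0, of "y - a"] by simp
  qed
  show ?case
  proof (cases "2*b \<le> v")
    case True
    have lt: "v - 2*b < v" using True ab by linarith
    have IH: "grd [1, a, 2*a, b, a+b, 2*b] (v-2*b) \<le> g3 a (v-2*b)"
      using less[OF lt] by blast
    have G: "grd [1, a, 2*a, b, a+b, 2*b] v = 1 + grd [1, a, 2*a, b, a+b, 2*b] (v - 2*b)"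
      using Grec[OF True ab] .
    have h1: "b - a \<le> v - (a+b)" using True ab by linarith
    have D1: "g3 a (v - (a+b) - (b-a)) \<le> g3 a (v - (a+b))"
      using lemD[OF h1] .
    have e1: "v - (a+b) - (b-a) = v - 2*b" using True ab by linarith
    have h2: "b - a \<le> v - b" using True ab by linarith
    have D2: "g3 a (v - b - (b-a)) \<le> g3 a (v - b)"
      using lemD[OF h2] .
    have h4: "a \<le> v - b - (b-a)" using True ab by linarith
    have C2: "g3 a (v - b - (b-a) - a) \<le> g3 a (v - b - (b-a))"
      using mono_a[OF h4] .
    have e2: "v - b - (b-a) - a = v - 2*b" using True ab by linarith
    have h3: "a+b \<le> v" using True ab by linarith
    have B1: "1 + g3 a (v - (a+b)) \<le> g3 a v"
      using lemB[OF h3] .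
    have X1: "g3 a (v - 2*b) \<le> g3 a (v - (a+b))"
      by (rule ord_eq_le_trans[OF arg_cong[where f="g3 a", OF e1[symmetric]] D1])
    have X2': "g3 a (v - 2*b) \<le> g3 a (v - b - (b-a))"
      by (rule ord_eq_le_trans[OF arg_cong[where f="g3 a", OF e2[symmetric]] C2])
    have X2: "g3 a (v - 2*b) \<le> g3 a (v - b)" using le_trans[OF X2' D2] .
    have r1: "grd [1, a, 2*a, b, a+b, 2*b] v \<le> g3 a v" by (rule chain1[OF G IH X1 B1])
    have r2: "grd [1, a, 2*a, b, a+b, 2*b] v \<le> 1 + g3 a (v-b)" by (rule chain2[OF G IH X2])
    have r3: "grd [1, a, 2*a, b, a+b, 2*b] v \<le> 1 + g3 a (v-(a+b))" by (rule chain2[OF G IH X1])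
    show ?thesis using r1 r2 r3 by blast
  next
    case False
    then have F1: "v < 2*b" by simp
    have G: "grd [1, a, 2*a, b, a+b, 2*b] v = G5 a b v" using Gsmall[OF F1] .
    show ?thesis
    proof (cases "a+b \<le> v")
      case True
      have G': "grd [1, a, 2*a, b, a+b, 2*b] v = 1 + g3 a (v - (a+b))"
        using trans[OF G G5_big[OF True F1]] .
      have h5: "a \<le> v - b" using True by linarith
      have C: "g3 a (v - b - a) \<le> g3 a (v - b)"
        using mono_a[OF h5] .
      have e: "v - b - a = v - (a+b)" by simp
      have B1: "1 + g3 a (v - (a+b)) \<le> g3 a v"
        using lemB[OF True] .
      have C': "g3 a (v - (a+b)) \<le> g3 a (v - b)"
        by (rule ord_eq_le_trans[OF arg_cong[where f="g3 a", OF e[symmetric]] C])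
      have r1: "grd [1, a, 2*a, b, a+b, 2*b] v \<le> g3 a v"
        by (rule ord_eq_le_trans[OF G' B1])
      have r2: "grd [1, a, 2*a, b, a+b, 2*b] v \<le> 1 + g3 a (v-b)"
        by (rule ord_eq_le_trans[OF G' add_left_mono[OF C']])
      show ?thesis using r1 r2 eq_imp_le[OF G'] by blast
    next
      case F2: False
      show ?thesis
      proof (cases "b \<le> v")
        case True
        have F3: "v < a + b" using F2 by simp
        have G': "grd [1, a, 2*a, b, a+b, 2*b] v = 1 + g3 a (v - b)"
          using trans[OF G G5_mid[OF True F3 ab]] .
        have lt: "v - b < a" using F3 True by linarith
        have g0: "g3 a (0*a + (v - b)) = (0+1) div 2 + (v - b)"
          using g3_eq[OF a0 lt] .
        have g: "g3 a (v - b) = v - b" using g0 by simp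
        have G'': "grd [1, a, 2*a, b, a+b, 2*b] v = 1 + (v - b)" using G' unfolding g .
        have r1: "grd [1, a, 2*a, b, a+b, 2*b] v \<le> g3 a v"
          by (rule ord_eq_le_trans[OF G'' lemF[OF True F3]])
        show ?thesis using r1 eq_imp_le[OF G'] F2 by blast
      next
        case False
        then have "v < b" by simp
        then have G0: "grd [1, a, 2*a, b, a+b, 2*b] v = g3 a v" using trans[OF G G5_small] by blast
        show ?thesis using False F2 eq_imp_le[OF G0] by blast
      qed
    qed
  qed
qed


lemma rep:
  "b*n4 + (a+b)*n5 + 2*b*n6 \<le> v \<Longrightarrow>
   grd [1, a, 2*a, b, a+b, 2*b] v \<le> n4+n5+n6 + g3 a (v - (b*n4 + (a+b)*n5 + 2*b*n6))"
proof (induction "n4+n5+n6" arbitrary: v n4 n5 n6 rule: less_induct)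
  case less
  have a0: "0 < a" using a2 by simp
  define B where "B = b*n4 + (a+b)*n5 + 2*b*n6"
  have hB: "B \<le> v" using less.prems unfolding B_def .
  show ?case unfolding B_def[symmetric]
  proof (cases "n6 > 0")
    case True
    then obtain m where m: "n6 = Suc m" by (cases n6) auto
    define B' where "B' = b*n4 + (a+b)*n5 + 2*b*m"
    have BB: "B = B' + 2*b" unfolding B_def B'_def m by simp
    have v2: "2*b \<le> v" using hB BB by linarith
    have h: "B' \<le> v - 2*b" using hB BB by linarith
    have IH: "grd [1, a, 2*a, b, a+b, 2*b] (v - 2*b) \<le> n4+n5+m + g3 a (v - 2*b - B')"
      using less.hyps[of n4 n5 m "v - 2*b"] h m unfolding B'_def by simp
    have e: "v - 2*b - B' = v - B" using BB by linarith
    have G: "grd [1, a, 2*a, b, a+b, 2*b] v = 1 + grd [1, a, 2*a, b, a+b, 2*b] (v - 2*b)"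
      using Grec[OF v2 ab] .
    show "grd [1, a, 2*a, b, a+b, 2*b] v \<le> n4+n5+n6 + g3 a (v - B)"
      using G IH unfolding e m by simp
  next
    case F6: False
    then have n6: "n6 = 0" by simp
    show "grd [1, a, 2*a, b, a+b, 2*b] v \<le> n4+n5+n6 + g3 a (v - B)"
    proof (cases "n4 \<ge> 2")
      case True
      then obtain m where m: "n4 = Suc (Suc m)" by (metis add_2_eq_Suc le_Suc_ex)
      have BB: "B = b*m + (a+b)*n5 + 2*b*1" unfolding B_def m n6 by (simp add: algebra_simps)
      have IH: "grd [1, a, 2*a, b, a+b, 2*b] v \<le> m+n5+1 + g3 a (v - B)"
        using less.hyps[of m n5 1 v] hB BB m n6 by simp
      then show ?thesis unfolding m n6 by simp
    next
      case F4: False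
      show ?thesis
      proof (cases "n5 \<ge> 2")
        case True
        then obtain m where m: "n5 = Suc (Suc m)" by (metis add_2_eq_Suc le_Suc_ex)
        define B' where "B' = b*n4 + (a+b)*m + 2*b*1"
        have BB: "B = B' + 2*a" unfolding B_def B'_def m n6 by (simp add: algebra_simps)
        have h: "B' \<le> v" using hB BB by linarith
        have IH: "grd [1, a, 2*a, b, a+b, 2*b] v \<le> n4+m+1 + g3 a (v - B')"
          using less.hyps[of n4 m 1 v] h m n6 unfolding B'_def by simp
        have e: "v - B' = (v - B) + 2*a" using BB hB by linarith
        have g: "g3 a (v - B') = g3 a (v - B) + 1" unfolding e by (rule g3_plus_2a[OF a0])
        show ?thesis using IH g unfolding m n6 by simp
      next
        case F5: False
        show ?thesis
        proof (cases "n4 \<ge> 1 \<and> n5 \<ge> 1")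
          case True
          then have n45: "n4 = 1" "n5 = 1" using F4 F5 by auto
          define B' where "B' = b*0 + (a+b)*0 + 2*b*1"
          have BB: "B = B' + a" unfolding B_def B'_def n45 n6 by (simp add: algebra_simps)
          have h: "B' \<le> v" using hB BB by linarith
          have IH: "grd [1, a, 2*a, b, a+b, 2*b] v \<le> 0+0+1 + g3 a (v - B')"
            using less.hyps[of 0 0 1 v] h n45 n6 unfolding B'_def by simp
          have e: "v - B' = (v - B) + a" using BB hB by linarith
          have g: "g3 a (v - B') \<le> g3 a (v - B) + 1" unfolding e by (rule g3_plus_a(2)[OF a0])
          show ?thesis using IH g unfolding n45 n6 by simp
        next
          case False
          then have cs: "(n4 = 0 \<and> n5 = 0) \<or> (n4 = 1 \<and> n5 = 0) \<or> (n4 = 0 \<and> n5 = 1)"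
            using F4 F5 by auto
          have K: "grd [1, a, 2*a, b, a+b, 2*b] v \<le> g3 a v \<and>
            (b \<le> v \<longrightarrow> grd [1, a, 2*a, b, a+b, 2*b] v \<le> 1 + g3 a (v-b)) \<and>
            (a+b \<le> v \<longrightarrow> grd [1, a, 2*a, b, a+b, 2*b] v \<le> 1 + g3 a (v-(a+b)))"
            by (rule key)
          show ?thesis
          proof -
            { assume c: "n4 = 0 \<and> n5 = 0"
              then have "B = 0" unfolding B_def n6 by simp
              then have ?thesis using K c n6 by simp }
            moreover
            { assume c: "n4 = 1 \<and> n5 = 0"
              then have "B = b" unfolding B_def n6 by simp
              then have ?thesis using K c n6 hB by simp }
            moreover
            { assume c: "n4 = 0 \<and> n5 = 1"
              then have "B = a+b" unfolding B_def n6 by simp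
              then have ?thesis using K c n6 hB by simp }
            ultimately show ?thesis using cs by blast
          qed
        qed
      qed
    qed
  qed
qed

end


lemma small_part:
  assumes "0 < a"
  shows "g3 a (n1 + a*n2 + 2*a*n3) \<le> n1+n2+n3"
proof -
  define k where "k = n1 div a"
  define s where "s = n1 mod a"
  have n1: "n1 = k*a + s" unfolding k_def s_def by simp
  have sa: "s < a" unfolding s_def using assms by simp
  have e: "n1 + a*n2 + 2*a*n3 = (n2 + 2*n3 + k)*a + s" unfolding n1 by (simp add: algebra_simps)
  have g: "g3 a (n1 + a*n2 + 2*a*n3) = (n2 + 2*n3 + k + 1) div 2 + s"
    unfolding e by (rule g3_eq[OF assms sa])
  have "k \<le> k*a" using assms by simp
  then have ks: "k + s \<le> n1" unfolding n1 by simp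
  have "(n2 + 2*n3 + k + 1) div 2 \<le> n3 + n2 + k" by presburger
  then show ?thesis using g ks by linarith
qed

lemma grd5: "grd [1, a, 2*a, b, a+b] v = v div (a+b) + v mod (a+b) div b + g3 a (v mod (a+b) mod b)"
  unfolding grd_def g3_def by (simp add: mod_mod_cancel)

lemma sum6:
  fixes a b n1 n2 n3 n4 n5 n6 :: nat
  shows "(\<Sum>i<length [1, a, 2*a, b, a+b, 2*b]. [1, a, 2*a, b, a+b, 2*b] ! i * [n1,n2,n3,n4,n5,n6] ! i)
     = n1 + a*n2 + 2*a*n3 + b*n4 + (a+b)*n5 + 2*b*n6"
  by (simp add: eval_nat_numeral)

theorem lemma13:
  fixes c2 c4 l :: nat
  assumes sys: "coin_system [1, c2, 2*c2, c4, c2+c4, 2*c4]"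
    and h1: "3*c2 \<le> c4 + 1"
    and h2: "c4 \<noteq> 3*c2"
    and hl: "l = nat \<lceil>real (c2+c4) / real (2*c2)\<rceil>"
    and hg: "int (grd [1, c2, 2*c2, c4, c2+c4, 2*c4] (l*(2*c2)))
             = int (l*(2*c2)) - int (c2+c4) + 1
               - \<lfloor>(real (l*(2*c2)) - real (c2+c4)) / real c2\<rfloor> * (int c2 - 1)"
    and hle: "grd [1, c2, 2*c2, c4, c2+c4, 2*c4] (l*(2*c2)) \<le> l"
  shows "canonical [1, c2, 2*c2, c4, c2+c4, 2*c4] \<and> \<not> canonical [1, c2, 2*c2, c4, c2+c4]"
proof -
  define a where "a = c2"
  define b where "b = c4"
  have sa: "sorted_wrt (<) [1, a, 2*a, b, a+b, 2*b]" using sys unfolding coin_system_def a_def b_def by simp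
  have a2: "2 \<le> a" using sa by simp
  have ab: "2*a < b" using sa by simp
  have a0: "0 < a" using a2 by simp
  have h1': "3*a \<le> b + 1" using h1 unfolding a_def b_def .
  have h2': "b \<noteq> 3*a" using h2 unfolding a_def b_def .
  define p where "p = b div a"
  define t where "t = b mod a"
  have bp: "b = p*a + t" unfolding p_def t_def by simp
  have tla: "t < a" unfolding t_def using a0 by simp
  have p2: "2 \<le> p"
  proof (rule ccontr)
    assume "\<not> 2 \<le> p"
    then have "p \<le> 1" by simp
    then have "p*a \<le> 1*a" by (rule mult_le_mono1)
    then show False using bp tla ab by linarith
  qed
  have K: "t = 0 \<or> a \<le> t + p div 2"
  proof (cases "t = 0")
    case True then show ?thesis by simp
  next
    case tpos: False
    show ?thesis
    proof (cases "b < 3*a")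
      case True
      have "p*a < 3*a" using True bp by linarith
      then have "p < 3" by simp
      then have "p = 2" using p2 by simp
      then show ?thesis using bp h1' by simp
    next
      case False
      then have b3: "3*a < b" using h2' by simp
      define x where "x = real (a+b) / real (2*a)"
      have xpos: "0 < x" unfolding x_def using a0 by simp
      have cc: "of_int \<lceil>x\<rceil> - 1 < x \<and> x \<le> of_int \<lceil>x\<rceil>" by (rule ceiling_correct)
      have cpos: "0 \<le> \<lceil>x\<rceil>" using xpos by simp
      have hl': "l = nat \<lceil>x\<rceil>" using hl unfolding x_def a_def b_def .
      have lx: "real l = of_int \<lceil>x\<rceil>" unfolding hl' using cpos by simp
      have r2a: "0 < real (2*a)" using a0 by simp
      have "real (a+b) / real (2*a) \<le> real l" using cc lx unfolding x_def by simp
      then have "real (a+b) \<le> real l * real (2*a)" using pos_divide_le_eq[OF r2a] by simp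
      then have "real (a+b) \<le> real (l*(2*a))" by simp
      then have L1: "a+b \<le> l*(2*a)" by (simp only: of_nat_le_iff)
      have "real l - 1 < real (a+b) / real (2*a)" using cc lx unfolding x_def by simp
      then have "(real l - 1) * real (2*a) < real (a+b)" using pos_less_divide_eq[OF r2a] by simp
      then have "real (l*(2*a)) < real (a+b+2*a)" by (simp add: algebra_simps)
      then have L2: "l*(2*a) < a+b+2*a" by (simp only: of_nat_less_iff)
      define v0 where "v0 = l*(2*a)"
      have v0b: "v0 < 2*b" using L2 b3 unfolding v0_def by linarith
      have v0a: "a+b \<le> v0" using L1 unfolding v0_def .
      have G: "grd [1, a, 2*a, b, a+b, 2*b] v0 = 1 + g3 a (v0 - (a+b))"
        using trans[OF Gsmall[OF v0b] G5_big[OF v0a v0b]] .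
      have hle': "grd [1, a, 2*a, b, a+b, 2*b] v0 \<le> l" using hle unfolding v0_def a_def b_def .
      have hd: "1 + g3 a (v0 - (a+b)) \<le> l" using hle' unfolding G .
      have e2l: "(2*l)*a = v0" unfolding v0_def by simp
      have ep1: "(p+1)*a = p*a + a" "(p+4)*a = p*a + 4*a" by (simp_all add: algebra_simps)
      have "(p+1)*a < (2*l)*a" using e2l ep1 v0a bp tpos by linarith
      then have f1: "p+1 < 2*l" by (simp only: mult_less_cancel2)
      have L2': "v0 < a+b+2*a" using L2 unfolding v0_def .
      have "(2*l)*a < (p+4)*a" using e2l ep1 L2' bp tla by linarith
      then have f2: "2*l < p+4" by (simp only: mult_less_cancel2)
      have tl: "a - t < a" using tpos tla by simp
      have "2*l = p+2 \<or> 2*l = p+3" using f1 f2 by linarith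
      then show ?thesis
      proof
        assume c: "2*l = p+2"
        have "(p+2)*a = p*a + 2*a" by (simp add: algebra_simps)
        then have "v0 = p*a + 2*a" using e2l c by simp
        then have d: "v0 - (a+b) = 0*a + (a - t)" using bp tla by simp
        have g: "g3 a (v0 - (a+b)) = (0+1) div 2 + (a - t)" unfolding d by (rule g3_eq[OF a0 tl])
        have "1 + (a - t) \<le> l" using hd unfolding g by simp
        moreover have "p div 2 = l - 1" using c by presburger
        ultimately show ?thesis using tla by linarith
      next
        assume c: "2*l = p+3"
        have "(p+3)*a = p*a + 3*a" by (simp add: algebra_simps)
        then have "v0 = p*a + 3*a" using e2l c by simp
        then have d: "v0 - (a+b) = 1*a + (a - t)" using bp tla by simp
        have g: "g3 a (v0 - (a+b)) = (1+1) div 2 + (a - t)" unfolding d by (rule g3_eq[OF a0 tl])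
        have "2 + (a - t) \<le> l" using hd unfolding g by simp
        moreover have "p div 2 = l - 2" using c by presburger
        ultimately show ?thesis using tla by linarith
      qed
    qed
  qed
  have part1: "canonical [1, a, 2*a, b, a+b, 2*b]"
    unfolding canonical_def counterexample_def
  proof
    assume "\<exists>w. 0 < w \<and> opt [1, a, 2*a, b, a+b, 2*b] w < grd [1, a, 2*a, b, a+b, 2*b] w"
    then obtain w where w: "opt [1, a, 2*a, b, a+b, 2*b] w < grd [1, a, 2*a, b, a+b, 2*b] w" by blast
    let ?C = "[1, a, 2*a, b, a+b, 2*b]"
    let ?P = "\<lambda>k. \<exists>x::nat list. length x = length ?C \<and> sum_list x = k \<and>
                 (\<Sum>i<length ?C. ?C ! i * x ! i) = w"
    have s0: "(\<Sum>i<length ?C. ?C ! i * [w,0,0,0,0,0] ! i) = w"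
      by (simp add: eval_nat_numeral)
    have ex: "?P w"
    proof (rule exI[of _ "[w,0,0,0,0,0]"], intro conjI)
      show "length [w,0,0,0,0,0] = length ?C" by simp
      show "sum_list [w,0,0,0,0,0] = w" by simp
      show "(\<Sum>i<length ?C. ?C ! i * [w,0,0,0,0,0] ! i) = w" by (rule s0)
    qed
    have "?P (opt ?C w)" unfolding opt_def by (rule LeastI[of ?P, OF ex])
    then obtain x where xall: "length x = length ?C \<and> sum_list x = opt ?C w \<and>
      (\<Sum>i<length ?C. ?C ! i * x ! i) = w" by blast
    have lC: "length ?C = 6" by simp
    have lx: "length x = 6" using xall lC by (simp only:)
    have sx: "sum_list x = opt ?C w" using xall by blast
    have vx: "(\<Sum>i<length ?C. ?C ! i * x ! i) = w" using xall by blast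
    obtain n1 n2 n3 n4 n5 n6 where xe: "x = [n1,n2,n3,n4,n5,n6]"
      using lx by (auto simp: length_Suc_conv eval_nat_numeral)
    have s1: "(\<Sum>i<length ?C. ?C ! i * x ! i) = n1 + a*n2 + 2*a*n3 + b*n4 + (a+b)*n5 + 2*b*n6"
      unfolding xe by (rule sum6)
    have wv: "w = n1 + a*n2 + 2*a*n3 + b*n4 + (a+b)*n5 + 2*b*n6"
      by (rule trans[OF sym[OF vx] s1])
    have hB: "b*n4 + (a+b)*n5 + 2*b*n6 \<le> w" using wv by linarith
    have R: "grd ?C w \<le> n4+n5+n6 + g3 a (w - (b*n4 + (a+b)*n5 + 2*b*n6))"
      by (rule rep[OF a2 ab bp tla K p2 hB])
    have e: "w - (b*n4 + (a+b)*n5 + 2*b*n6) = n1 + a*n2 + 2*a*n3" using wv by linarith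
    have S: "g3 a (n1 + a*n2 + 2*a*n3) \<le> n1+n2+n3" by (rule small_part[OF a0])
    have "grd ?C w \<le> n4+n5+n6 + (n1+n2+n3)" using R S unfolding e by linarith
    moreover have "sum_list x = n1+n2+n3+n4+n5+n6" unfolding xe by simp
    ultimately show False using w sx by linarith
  qed
  have part2: "\<not> canonical [1, a, 2*a, b, a+b]"
  proof -
    let ?C = "[1, a, 2*a, b, a+b]"
    let ?Q = "\<lambda>k. \<exists>x::nat list. length x = length ?C \<and> sum_list x = k \<and>
                 (\<Sum>i<length ?C. ?C ! i * x ! i) = 2*b"
    have s0: "(\<Sum>i<length ?C. ?C ! i * [0,0,0,2,0] ! i) = 2*b"
      by (simp add: eval_nat_numeral)
    have ex: "?Q 2"
    proof (rule exI[of _ "[0,0,0,2,0]"], intro conjI)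
      show "length [0,0,0,2,0] = length ?C" by simp
      show "sum_list [0,0,0,2,0] = (2::nat)" by simp
      show "(\<Sum>i<length ?C. ?C ! i * [0,0,0,2,0] ! i) = 2*b" by (rule s0)
    qed
    have o: "opt ?C (2*b) \<le> 2" unfolding opt_def by (rule Least_le[of ?Q, OF ex])
    have d1: "(2*b) div (a+b) = 1" using ab a0 by (intro div_nat_eqI) auto
    have m1: "(2*b) mod (a+b) = b - a" using ab a0 by (simp add: le_mod_geq)
    have m2: "(b - a) div b = 0" "(b-a) mod b = b - a" using ab a0 by simp_all
    have G: "grd ?C (2*b) = 1 + g3 a (b - a)" unfolding grd5 d1 m1 m2 by simp
    obtain p1 where p1: "p = Suc p1" using p2 by (cases p) auto
    have ba: "b - a = p1*a + t" using bp p1 by simp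
    have "2 \<le> g3 a (b - a)"
    proof (cases "p1 \<ge> 3")
      case True
      have "g3 a (b - a) = (p1+1) div 2 + t" unfolding ba by (rule g3_eq[OF a0 tla])
      then show ?thesis using True by presburger
    next
      case False
      have g: "g3 a (b - a) = (p1+1) div 2 + t" unfolding ba by (rule g3_eq[OF a0 tla])
      have "p1 = 1 \<or> p1 = 2" using False p1 p2 by linarith
      then show ?thesis
      proof
        assume c: "p1 = 1"
        then have "b = 2*a + t" using bp p1 by simp
        then have "1 \<le> t" using h1' a2 by linarith
        then show ?thesis using g c by simp
      next
        assume c: "p1 = 2"
        then have "b = 3*a + t" using bp p1 by simp
        then have "1 \<le> t" using h2' by (cases t) auto
        then show ?thesis using g c by simp
      qed
    qed
    then have "opt ?C (2*b) < grd ?C (2*b)" using o G by linarith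
    moreover have "0 < 2*b" using ab by simp
    ultimately show ?thesis unfolding canonical_def counterexample_def by blast
  qed
  show ?thesis using part1 part2 unfolding a_def b_def by simp
qed

end
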